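(* Let $(\mathbb{C},P)$ be an extensional, cauchy-complete regular doctrine with full comprehensions. Then a morphism $f:A\to B$ of $\mathbb{C}$ is a monomorphism if and only if it is a comprehension of some formula $\beta\in P(B)$ (i.e. $f=\lfloor\beta\rfloor\circ k$ for some isomorphism $k$; one may take $\beta=\exists_f\top_A$).
   Context: A regular doctrine is $(\mathbb{C},P)$, $\mathbb{C}$ non-empty with binary products, $P:\mathbb{C}^{op}\to$ inf-semilattices, with $f^*=P(f)$ having left adjoints $\exists_f$ satisfying Beck–Chevalley and Frobenius reciprocity; $\delta_A=\exists_{\langle id_A,id_A\rangle}\top_A$. Full comprehension of $\alpha\in P(A)$: $\lfloor\alpha\rfloor:X\to A$ with $\lfloor\alpha\rfloor^*\alpha=\top_X$, universal among arrows $f$ with $f^*\alpha=\top$ (unique factorization), and with $\lfloor\alpha\rfloor^*\alpha\le\lfloor\alpha\rfloor^*\beta$ iff $\alpha\le\beta$. Extensional: for parallel $f,g:X\to A$, $f=g$ iff $\top_X\le\langle f,g\rangle^*\delta_A$. A formula $F\in P(Y\times A)$ is functional from $Y$ to $A$ if $\top_Y\le\exists_{\pi_1}F$ (where $\pi_1:Y\times A\to Y$) and $\langle\pi_1,\pi_2\rangle^*F\wedge\langle\pi_1,\pi_3\rangle^*F\le\langle\pi_2,\pi_3\rangle^*\delta_A$ in $P(Y\times A\times A)$. An object $A$ is cauchy-complete if for every $Y$ and every $F$ functional from $Y$ to $A$ there is $f:Y\to A$ with $(f\times id_A)^*\delta_A=F$; the doctrine is cauchy-complete if all objects are. *)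

theory Defs
  imports Main
begin

text \<open>Objects have type 'o, arrows type 'a,
  formulas type 'p; P(A) is the set Pr A with order leq A, top tp A and
  binary meet mt A.  rdx f is reindexing f^*, ex f is the left adjoint
  \<exists>_f.  cmp g f is the composite g \<circ> f.\<close>

record ('o, 'a, 'p) doctrine =
  Ob   :: "'o set"
  Ar   :: "'a set"
  dom  :: "'a \<Rightarrow> 'o"
  cod  :: "'a \<Rightarrow> 'o"
  cmp  :: "'a \<Rightarrow> 'a \<Rightarrow> 'a"
  idt  :: "'o \<Rightarrow> 'a"
  prd  :: "'o \<Rightarrow> 'o \<Rightarrow> 'o"
  pr1  :: "'o \<Rightarrow> 'o \<Rightarrow> 'a"
  pr2  :: "'o \<Rightarrow> 'o \<Rightarrow> 'a"
  pair :: "'a \<Rightarrow> 'a \<Rightarrow> 'a"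
  Pr   :: "'o \<Rightarrow> 'p set"
  leq  :: "'o \<Rightarrow> 'p \<Rightarrow> 'p \<Rightarrow> bool"
  tp   :: "'o \<Rightarrow> 'p"
  mt   :: "'o \<Rightarrow> 'p \<Rightarrow> 'p \<Rightarrow> 'p"
  rdx  :: "'a \<Rightarrow> 'p \<Rightarrow> 'p"
  ex   :: "'a \<Rightarrow> 'p \<Rightarrow> 'p"

definition hom :: "('o, 'a, 'p, 'x) doctrine_scheme \<Rightarrow> 'o \<Rightarrow> 'o \<Rightarrow> 'a set" where
  "hom D X Y = {f \<in> Ar D. dom D f = X \<and> cod D f = Y}"

definition is_category :: "('o, 'a, 'p, 'x) doctrine_scheme \<Rightarrow> bool" where
  "is_category D \<longleftrightarrow>
     (\<forall>f \<in> Ar D. dom D f \<in> Ob D \<and> cod D f \<in> Ob D) \<and>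
     (\<forall>A \<in> Ob D. idt D A \<in> hom D A A) \<and>
     (\<forall>f \<in> Ar D. \<forall>g \<in> Ar D. cod D f = dom D g \<longrightarrow>
         cmp D g f \<in> hom D (dom D f) (cod D g)) \<and>
     (\<forall>f \<in> Ar D. cmp D (idt D (cod D f)) f = f \<and> cmp D f (idt D (dom D f)) = f) \<and>
     (\<forall>f \<in> Ar D. \<forall>g \<in> Ar D. \<forall>h \<in> Ar D. cod D f = dom D g \<longrightarrow> cod D g = dom D h \<longrightarrow>
         cmp D h (cmp D g f) = cmp D (cmp D h g) f)"

definition has_binary_products :: "('o, 'a, 'p, 'x) doctrine_scheme \<Rightarrow> bool" where
  "has_binary_products D \<longleftrightarrow>
     (\<forall>A \<in> Ob D. \<forall>B \<in> Ob D.
        prd D A B \<in> Ob D \<and>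
        pr1 D A B \<in> hom D (prd D A B) A \<and>
        pr2 D A B \<in> hom D (prd D A B) B \<and>
        (\<forall>X \<in> Ob D. \<forall>f \<in> hom D X A. \<forall>g \<in> hom D X B.
           pair D f g \<in> hom D X (prd D A B) \<and>
           cmp D (pr1 D A B) (pair D f g) = f \<and>
           cmp D (pr2 D A B) (pair D f g) = g \<and>
           (\<forall>h \<in> hom D X (prd D A B).
              cmp D (pr1 D A B) h = f \<longrightarrow> cmp D (pr2 D A B) h = g \<longrightarrow> h = pair D f g)))"

definition is_pullback ::
  "('o, 'a, 'p, 'x) doctrine_scheme \<Rightarrow> 'a \<Rightarrow> 'a \<Rightarrow> 'a \<Rightarrow> 'a \<Rightarrow> bool" where
  \<comment> \<open>square  p : D0 \<rightarrow> A,  q : D0 \<rightarrow> B,  f : A \<rightarrow> C,  g : B \<rightarrow> C,  f p = g q, universal\<close>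
  "is_pullback D f g p q \<longleftrightarrow>
     f \<in> Ar D \<and> g \<in> Ar D \<and> p \<in> Ar D \<and> q \<in> Ar D \<and>
     cod D f = cod D g \<and> cod D p = dom D f \<and> cod D q = dom D g \<and> dom D p = dom D q \<and>
     cmp D f p = cmp D g q \<and>
     (\<forall>X \<in> Ob D. \<forall>u \<in> hom D X (dom D f). \<forall>v \<in> hom D X (dom D g).
        cmp D f u = cmp D g v \<longrightarrow>
        (\<exists>!w. w \<in> hom D X (dom D p) \<and> cmp D p w = u \<and> cmp D q w = v))"

definition is_inf_semilattice :: "('o, 'a, 'p, 'x) doctrine_scheme \<Rightarrow> 'o \<Rightarrow> bool" where
  "is_inf_semilattice D A \<longleftrightarrow>
     (\<forall>a \<in> Pr D A. leq D A a a) \<and>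
     (\<forall>a \<in> Pr D A. \<forall>b \<in> Pr D A. leq D A a b \<longrightarrow> leq D A b a \<longrightarrow> a = b) \<and>
     (\<forall>a \<in> Pr D A. \<forall>b \<in> Pr D A. \<forall>c \<in> Pr D A. leq D A a b \<longrightarrow> leq D A b c \<longrightarrow> leq D A a c) \<and>
     tp D A \<in> Pr D A \<and> (\<forall>a \<in> Pr D A. leq D A a (tp D A)) \<and>
     (\<forall>a \<in> Pr D A. \<forall>b \<in> Pr D A.
        mt D A a b \<in> Pr D A \<and> leq D A (mt D A a b) a \<and> leq D A (mt D A a b) b \<and>
        (\<forall>c \<in> Pr D A. leq D A c a \<longrightarrow> leq D A c b \<longrightarrow> leq D A c (mt D A a b)))"

definition is_doctrine :: "('o, 'a, 'p, 'x) doctrine_scheme \<Rightarrow> bool" where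
  "is_doctrine D \<longleftrightarrow>
     (\<forall>A \<in> Ob D. is_inf_semilattice D A) \<and>
     (\<forall>f \<in> Ar D.
        (\<forall>b \<in> Pr D (cod D f). rdx D f b \<in> Pr D (dom D f)) \<and>
        (\<forall>a \<in> Pr D (cod D f). \<forall>b \<in> Pr D (cod D f).
           leq D (cod D f) a b \<longrightarrow> leq D (dom D f) (rdx D f a) (rdx D f b)) \<and>
        rdx D f (tp D (cod D f)) = tp D (dom D f) \<and>
        (\<forall>a \<in> Pr D (cod D f). \<forall>b \<in> Pr D (cod D f).
           rdx D f (mt D (cod D f) a b) = mt D (dom D f) (rdx D f a) (rdx D f b))) \<and>
     (\<forall>A \<in> Ob D. \<forall>a \<in> Pr D A. rdx D (idt D A) a = a) \<and>
     (\<forall>f \<in> Ar D. \<forall>g \<in> Ar D. cod D f = dom D g \<longrightarrow>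
        (\<forall>c \<in> Pr D (cod D g). rdx D (cmp D g f) c = rdx D f (rdx D g c)))"

definition is_regular_doctrine :: "('o, 'a, 'p, 'x) doctrine_scheme \<Rightarrow> bool" where
  "is_regular_doctrine D \<longleftrightarrow>
     is_category D \<and> Ob D \<noteq> {} \<and> has_binary_products D \<and> is_doctrine D \<and>
     \<comment> \<open>left adjoints \<exists>_f \<stileturn> f^*\<close>
     (\<forall>f \<in> Ar D.
        (\<forall>a \<in> Pr D (dom D f). ex D f a \<in> Pr D (cod D f)) \<and>
        (\<forall>a \<in> Pr D (dom D f). \<forall>b \<in> Pr D (cod D f).
           leq D (cod D f) (ex D f a) b \<longleftrightarrow> leq D (dom D f) a (rdx D f b))) \<and>
     \<comment> \<open>Beck--Chevalley for every pullback square\<close>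
     (\<forall>f g p q. is_pullback D f g p q \<longrightarrow>
        (\<forall>a \<in> Pr D (dom D f). rdx D g (ex D f a) = ex D q (rdx D p a))) \<and>
     \<comment> \<open>Frobenius reciprocity\<close>
     (\<forall>f \<in> Ar D. \<forall>a \<in> Pr D (dom D f). \<forall>b \<in> Pr D (cod D f).
        ex D f (mt D (dom D f) (rdx D f b) a) = mt D (cod D f) b (ex D f a))"

definition delta :: "('o, 'a, 'p, 'x) doctrine_scheme \<Rightarrow> 'o \<Rightarrow> 'p" where
  "delta D A = ex D (pair D (idt D A) (idt D A)) (tp D A)"

definition is_mono :: "('o, 'a, 'p, 'x) doctrine_scheme \<Rightarrow> 'a \<Rightarrow> bool" where
  "is_mono D f \<longleftrightarrow> f \<in> Ar D \<and>
     (\<forall>X \<in> Ob D. \<forall>g \<in> hom D X (dom D f). \<forall>h \<in> hom D X (dom D f).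
        cmp D f g = cmp D f h \<longrightarrow> g = h)"

definition is_iso :: "('o, 'a, 'p, 'x) doctrine_scheme \<Rightarrow> 'a \<Rightarrow> bool" where
  "is_iso D k \<longleftrightarrow> k \<in> Ar D \<and>
     (\<exists>l \<in> hom D (cod D k) (dom D k).
        cmp D l k = idt D (dom D k) \<and> cmp D k l = idt D (cod D k))"

definition is_full_comprehension ::
  "('o, 'a, 'p, 'x) doctrine_scheme \<Rightarrow> 'o \<Rightarrow> 'p \<Rightarrow> 'a \<Rightarrow> bool" where
  "is_full_comprehension D A a c \<longleftrightarrow>
     c \<in> Ar D \<and> cod D c = A \<and> rdx D c a = tp D (dom D c) \<and>
     (\<forall>Y \<in> Ob D. \<forall>f \<in> hom D Y A. rdx D f a = tp D Y \<longrightarrow>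
        (\<exists>!h. h \<in> hom D Y (dom D c) \<and> cmp D c h = f)) \<and>
     (\<forall>b \<in> Pr D A. leq D (dom D c) (rdx D c a) (rdx D c b) \<longleftrightarrow> leq D A a b)"

definition has_full_comprehensions :: "('o, 'a, 'p, 'x) doctrine_scheme \<Rightarrow> bool" where
  "has_full_comprehensions D \<longleftrightarrow>
     (\<forall>A \<in> Ob D. \<forall>a \<in> Pr D A. \<exists>c. is_full_comprehension D A a c)"

definition is_extensional :: "('o, 'a, 'p, 'x) doctrine_scheme \<Rightarrow> bool" where
  "is_extensional D \<longleftrightarrow>
     (\<forall>X \<in> Ob D. \<forall>A \<in> Ob D. \<forall>f \<in> hom D X A. \<forall>g \<in> hom D X A.
        f = g \<longleftrightarrow> leq D X (tp D X) (rdx D (pair D f g) (delta D A)))"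

definition is_functional ::
  "('o, 'a, 'p, 'x) doctrine_scheme \<Rightarrow> 'o \<Rightarrow> 'o \<Rightarrow> 'p \<Rightarrow> bool" where
  "is_functional D Y A F \<longleftrightarrow>
     F \<in> Pr D (prd D Y A) \<and>
     leq D Y (tp D Y) (ex D (pr1 D Y A) F) \<and>
     (let YAA = prd D Y (prd D A A);
          p1 = pr1 D Y (prd D A A);
          p2 = cmp D (pr1 D A A) (pr2 D Y (prd D A A));
          p3 = cmp D (pr2 D A A) (pr2 D Y (prd D A A))
      in leq D YAA (mt D YAA (rdx D (pair D p1 p2) F) (rdx D (pair D p1 p3) F))
                   (rdx D (pair D p2 p3) (delta D A)))"

definition cauchy_complete_object :: "('o, 'a, 'p, 'x) doctrine_scheme \<Rightarrow> 'o \<Rightarrow> bool" where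
  "cauchy_complete_object D A \<longleftrightarrow>
     (\<forall>Y \<in> Ob D. \<forall>F. is_functional D Y A F \<longrightarrow>
        (\<exists>f \<in> hom D Y A.
           rdx D (pair D (cmp D f (pr1 D Y A)) (pr2 D Y A)) (delta D A) = F))"

definition is_cauchy_complete :: "('o, 'a, 'p, 'x) doctrine_scheme \<Rightarrow> bool" where
  "is_cauchy_complete D \<longleftrightarrow> (\<forall>A \<in> Ob D. cauchy_complete_object D A)"

end

theory Submission
  imports Defs
begin

locale RD =
  fixes D :: "('o, 'a, 'p) doctrine"
  assumes R: "is_regular_doctrine D"
begin

lemma cat: "is_category D" using R unfolding is_regular_doctrine_def by blast
lemma prods: "has_binary_products D" using R unfolding is_regular_doctrine_def by blast
lemma doc: "is_doctrine D" using R unfolding is_regular_doctrine_def by blast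

lemma homI: "f \<in> Ar D \<Longrightarrow> f \<in> hom D (dom D f) (cod D f)" by (simp add: hom_def)
lemma homD: "f \<in> hom D X Y \<Longrightarrow> f \<in> Ar D \<and> dom D f = X \<and> cod D f = Y" by (simp add: hom_def)

lemma ar_ob: "f \<in> Ar D \<Longrightarrow> dom D f \<in> Ob D \<and> cod D f \<in> Ob D"
  using cat unfolding is_category_def by blast

lemma comp_hom: "f \<in> hom D X Y \<Longrightarrow> g \<in> hom D Y Z \<Longrightarrow> cmp D g f \<in> hom D X Z"
  using cat unfolding is_category_def hom_def by auto

lemma id_hom: "A \<in> Ob D \<Longrightarrow> idt D A \<in> hom D A A"
  using cat unfolding is_category_def by blast

lemma id_l: "f \<in> hom D X Y \<Longrightarrow> cmp D (idt D Y) f = f"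
  using cat unfolding is_category_def hom_def by auto
lemma id_r: "f \<in> hom D X Y \<Longrightarrow> cmp D f (idt D X) = f"
  using cat unfolding is_category_def hom_def by auto
lemma assoc: "f \<in> hom D X Y \<Longrightarrow> g \<in> hom D Y Z \<Longrightarrow> h \<in> hom D Z W \<Longrightarrow>
   cmp D h (cmp D g f) = cmp D (cmp D h g) f"
  using cat unfolding is_category_def hom_def by auto

lemma prd_ob: "A \<in> Ob D \<Longrightarrow> B \<in> Ob D \<Longrightarrow> prd D A B \<in> Ob D"
  using prods unfolding has_binary_products_def by blast
lemma pr1_hom: "A \<in> Ob D \<Longrightarrow> B \<in> Ob D \<Longrightarrow> pr1 D A B \<in> hom D (prd D A B) A"
  using prods unfolding has_binary_products_def by blast
lemma pr2_hom: "A \<in> Ob D \<Longrightarrow> B \<in> Ob D \<Longrightarrow> pr2 D A B \<in> hom D (prd D A B) B"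
  using prods unfolding has_binary_products_def by blast
lemma pair_hom: "A \<in> Ob D \<Longrightarrow> B \<in> Ob D \<Longrightarrow> X \<in> Ob D \<Longrightarrow> f \<in> hom D X A \<Longrightarrow> g \<in> hom D X B
   \<Longrightarrow> pair D f g \<in> hom D X (prd D A B)"
  using prods unfolding has_binary_products_def by blast
lemma pr1_pair: "A \<in> Ob D \<Longrightarrow> B \<in> Ob D \<Longrightarrow> X \<in> Ob D \<Longrightarrow> f \<in> hom D X A \<Longrightarrow> g \<in> hom D X B
   \<Longrightarrow> cmp D (pr1 D A B) (pair D f g) = f"
  using prods unfolding has_binary_products_def by blast
lemma pr2_pair: "A \<in> Ob D \<Longrightarrow> B \<in> Ob D \<Longrightarrow> X \<in> Ob D \<Longrightarrow> f \<in> hom D X A \<Longrightarrow> g \<in> hom D X B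
   \<Longrightarrow> cmp D (pr2 D A B) (pair D f g) = g"
  using prods unfolding has_binary_products_def by blast
lemma pair_uniq: "A \<in> Ob D \<Longrightarrow> B \<in> Ob D \<Longrightarrow> X \<in> Ob D \<Longrightarrow> f \<in> hom D X A \<Longrightarrow> g \<in> hom D X B
   \<Longrightarrow> h \<in> hom D X (prd D A B) \<Longrightarrow> cmp D (pr1 D A B) h = f \<Longrightarrow> cmp D (pr2 D A B) h = g
   \<Longrightarrow> h = pair D f g"
  using prods unfolding has_binary_products_def by blast

lemma pair_comp:
  assumes "A \<in> Ob D" "B \<in> Ob D" "X \<in> Ob D" "Y \<in> Ob D" "a \<in> hom D Y A" "b \<in> hom D Y B"
    "h \<in> hom D X Y"
  shows "cmp D (pair D a b) h = pair D (cmp D a h) (cmp D b h)"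
proof (rule pair_uniq)
  have p: "pair D a b \<in> hom D Y (prd D A B)" using assms pair_hom by blast
  show "cmp D (pair D a b) h \<in> hom D X (prd D A B)" using p assms comp_hom by blast
  show "cmp D (pr1 D A B) (cmp D (pair D a b) h) = cmp D a h"
    using assoc[OF assms(7) p pr1_hom] pr1_pair assms by simp
  show "cmp D (pr2 D A B) (cmp D (pair D a b) h) = cmp D b h"
    using assoc[OF assms(7) p pr2_hom] pr2_pair assms by simp
qed (use assms comp_hom in auto)

lemma sl: "A \<in> Ob D \<Longrightarrow> is_inf_semilattice D A"
  using doc unfolding is_doctrine_def by blast

lemma le_refl: "A \<in> Ob D \<Longrightarrow> a \<in> Pr D A \<Longrightarrow> leq D A a a"
  using sl unfolding is_inf_semilattice_def by blast
lemma le_antisym: "A \<in> Ob D \<Longrightarrow> a \<in> Pr D A \<Longrightarrow> b \<in> Pr D A \<Longrightarrow> leq D A a b \<Longrightarrow> leq D A b a \<Longrightarrow> a = b"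
  using sl unfolding is_inf_semilattice_def by blast
lemma le_trans: "A \<in> Ob D \<Longrightarrow> a \<in> Pr D A \<Longrightarrow> b \<in> Pr D A \<Longrightarrow> c \<in> Pr D A \<Longrightarrow> leq D A a b \<Longrightarrow> leq D A b c \<Longrightarrow> leq D A a c"
  using sl unfolding is_inf_semilattice_def by blast
lemma tp_Pr: "A \<in> Ob D \<Longrightarrow> tp D A \<in> Pr D A"
  using sl unfolding is_inf_semilattice_def by blast
lemma tp_top: "A \<in> Ob D \<Longrightarrow> a \<in> Pr D A \<Longrightarrow> leq D A a (tp D A)"
  using sl unfolding is_inf_semilattice_def by blast
lemma mt_Pr: "A \<in> Ob D \<Longrightarrow> a \<in> Pr D A \<Longrightarrow> b \<in> Pr D A \<Longrightarrow> mt D A a b \<in> Pr D A"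
  using sl unfolding is_inf_semilattice_def by blast
lemma mt_le1: "A \<in> Ob D \<Longrightarrow> a \<in> Pr D A \<Longrightarrow> b \<in> Pr D A \<Longrightarrow> leq D A (mt D A a b) a"
  using sl unfolding is_inf_semilattice_def by blast
lemma mt_le2: "A \<in> Ob D \<Longrightarrow> a \<in> Pr D A \<Longrightarrow> b \<in> Pr D A \<Longrightarrow> leq D A (mt D A a b) b"
  using sl unfolding is_inf_semilattice_def by blast

lemma top_eq: "A \<in> Ob D \<Longrightarrow> a \<in> Pr D A \<Longrightarrow> leq D A (tp D A) a \<Longrightarrow> a = tp D A"
  using le_antisym tp_Pr tp_top by blast

lemma rdx_Pr: "f \<in> hom D X Y \<Longrightarrow> b \<in> Pr D Y \<Longrightarrow> rdx D f b \<in> Pr D X"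
  using doc unfolding is_doctrine_def hom_def by auto
lemma rdx_mono: "f \<in> hom D X Y \<Longrightarrow> a \<in> Pr D Y \<Longrightarrow> b \<in> Pr D Y \<Longrightarrow> leq D Y a b \<Longrightarrow> leq D X (rdx D f a) (rdx D f b)"
  using doc unfolding is_doctrine_def hom_def by auto
lemma rdx_tp: "f \<in> hom D X Y \<Longrightarrow> rdx D f (tp D Y) = tp D X"
  using doc unfolding is_doctrine_def hom_def by auto
lemma rdx_mt: "f \<in> hom D X Y \<Longrightarrow> a \<in> Pr D Y \<Longrightarrow> b \<in> Pr D Y \<Longrightarrow> rdx D f (mt D Y a b) = mt D X (rdx D f a) (rdx D f b)"
  using doc unfolding is_doctrine_def hom_def by auto
lemma rdx_comp: "f \<in> hom D X Y \<Longrightarrow> g \<in> hom D Y Z \<Longrightarrow> c \<in> Pr D Z \<Longrightarrow> rdx D (cmp D g f) c = rdx D f (rdx D g c)"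
  using doc unfolding is_doctrine_def hom_def by auto
lemma rdx_id: "A \<in> Ob D \<Longrightarrow> a \<in> Pr D A \<Longrightarrow> rdx D (idt D A) a = a"
  using doc unfolding is_doctrine_def by auto

lemma ex_Pr: "f \<in> hom D X Y \<Longrightarrow> a \<in> Pr D X \<Longrightarrow> ex D f a \<in> Pr D Y"
  using R unfolding is_regular_doctrine_def hom_def by auto
lemma adj: "f \<in> hom D X Y \<Longrightarrow> a \<in> Pr D X \<Longrightarrow> b \<in> Pr D Y \<Longrightarrow> leq D Y (ex D f a) b \<longleftrightarrow> leq D X a (rdx D f b)"
  using R unfolding is_regular_doctrine_def hom_def by auto
lemma BC: "is_pullback D f g p q \<Longrightarrow> a \<in> Pr D (dom D f) \<Longrightarrow> rdx D g (ex D f a) = ex D q (rdx D p a)"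
  using R unfolding is_regular_doctrine_def by blast

lemma delta_Pr: "A \<in> Ob D \<Longrightarrow> delta D A \<in> Pr D (prd D A A)"
  unfolding delta_def using ex_Pr pair_hom id_hom tp_Pr by blast

lemma ext:
  assumes E: "is_extensional D" and "X \<in> Ob D" "A \<in> Ob D" "f \<in> hom D X A" "g \<in> hom D X A"
  shows "f = g \<longleftrightarrow> rdx D (pair D f g) (delta D A) = tp D X"
proof -
  have "rdx D (pair D f g) (delta D A) \<in> Pr D X"
    using assms rdx_Pr pair_hom delta_Pr by blast
  then show ?thesis using E assms unfolding is_extensional_def
    by (metis le_refl tp_Pr top_eq)
qed

lemma pointwise:
  assumes FC: "has_full_comprehensions D" and X: "X \<in> Ob D" and a: "a \<in> Pr D X" and b: "b \<in> Pr D X"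
    and H: "\<And>Y h. Y \<in> Ob D \<Longrightarrow> h \<in> hom D Y X \<Longrightarrow> rdx D h a = tp D Y \<Longrightarrow> rdx D h b = tp D Y"
  shows "leq D X a b"
proof -
  obtain m where m: "is_full_comprehension D X a m" using FC X a unfolding has_full_comprehensions_def by blast
  have mh: "m \<in> hom D (dom D m) X" and ma: "rdx D m a = tp D (dom D m)"
    using m unfolding is_full_comprehension_def hom_def by auto
  have Y: "dom D m \<in> Ob D" using mh ar_ob homD by blast
  have mb: "rdx D m b = tp D (dom D m)" using H[OF Y mh ma] .
  have "leq D (dom D m) (rdx D m a) (rdx D m b)" using ma mb le_refl[OF Y tp_Pr[OF Y]] by simp
  then show ?thesis using m b unfolding is_full_comprehension_def by blast
qed

lemma compr_mono:
  assumes "is_full_comprehension D B a c" and aP: "a \<in> Pr D B"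
  shows "is_mono D c"
  unfolding is_mono_def
proof (intro conjI ballI impI)
  have c1: "c \<in> Ar D" "cod D c = B" "rdx D c a = tp D (dom D c)"
    using assms(1) unfolding is_full_comprehension_def by (elim conjE; simp)+
  show "c \<in> Ar D" using c1 by simp
  fix X g h assume X: "X \<in> Ob D" and g: "g \<in> hom D X (dom D c)" and h: "h \<in> hom D X (dom D c)"
    and e: "cmp D c g = cmp D c h"
  have ch: "c \<in> hom D (dom D c) B" and ca: "rdx D c a = tp D (dom D c)"
    using c1 unfolding hom_def by simp_all
  have cg: "cmp D c g \<in> hom D X B" using comp_hom[OF g ch] .
  have "rdx D (cmp D c g) a = tp D X" using rdx_comp[OF g ch aP] ca rdx_tp[OF g] by simp
  then have U: "\<exists>!w. w \<in> hom D X (dom D c) \<and> cmp D c w = cmp D c g"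
    using assms(1) X cg unfolding is_full_comprehension_def by blast
  then show "g = h" using g h e by (metis (no_types, lifting))
qed

lemma mono_comp_iso:
  assumes "is_mono D c" "is_iso D k" "cod D k = dom D c"
  shows "is_mono D (cmp D c k)"
proof -
  have c: "c \<in> hom D (dom D c) (cod D c)" and k: "k \<in> hom D (dom D k) (dom D c)"
    using assms unfolding is_mono_def is_iso_def hom_def by auto
  obtain l where l: "l \<in> hom D (dom D c) (dom D k)" "cmp D l k = idt D (dom D k)"
    using assms unfolding is_iso_def by auto
  have ck: "cmp D c k \<in> hom D (dom D k) (cod D c)" using comp_hom[OF k c] .
  show ?thesis unfolding is_mono_def
  proof (intro conjI ballI impI)
    show "cmp D c k \<in> Ar D" using ck homD by blast
    fix X g h assume X: "X \<in> Ob D" and g: "g \<in> hom D X (dom D (cmp D c k))"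
      and h: "h \<in> hom D X (dom D (cmp D c k))" and e: "cmp D (cmp D c k) g = cmp D (cmp D c k) h"
    have g': "g \<in> hom D X (dom D k)" and h': "h \<in> hom D X (dom D k)" using g h ck homD by auto
    have "cmp D c (cmp D k g) = cmp D c (cmp D k h)" using e assoc[OF g' k c] assoc[OF h' k c] by simp
    then have "cmp D k g = cmp D k h" using assms(1) X comp_hom[OF g' k] comp_hom[OF h' k]
      unfolding is_mono_def by blast
    then have "cmp D l (cmp D k g) = cmp D l (cmp D k h)" by simp
    then show "g = h" using assoc[OF g' k l(1)] assoc[OF h' k l(1)] l(2) id_l[OF g'] id_l[OF h'] by simp
  qed
qed


lemma main:
  assumes E: "is_extensional D" and CC: "is_cauchy_complete D" and FC: "has_full_comprehensions D"
    and AO: "A \<in> Ob D" and BO: "B \<in> Ob D" and fh: "f \<in> hom D A B" and fm: "is_mono D f"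
  shows "\<exists>c k. is_full_comprehension D B (ex D f (tp D A)) c \<and> is_iso D k \<and>
                cod D k = dom D c \<and> f = cmp D c k"
proof -
  define \<beta> where "\<beta> = ex D f (tp D A)"
  have \<beta>P: "\<beta> \<in> Pr D B" unfolding \<beta>_def using ex_Pr[OF fh tp_Pr[OF AO]] .
  obtain c where cc: "is_full_comprehension D B \<beta> c" using FC BO \<beta>P unfolding has_full_comprehensions_def by blast
  define C where "C = dom D c"
  have ch: "c \<in> hom D C B" and cb: "rdx D c \<beta> = tp D C"
    using cc unfolding is_full_comprehension_def hom_def C_def by auto
  have CO: "C \<in> Ob D" using ch homD ar_ob by blast
  have cm: "is_mono D c" using compr_mono[OF cc \<beta>P] .
  have "leq D A (tp D A) (rdx D f \<beta>)" unfolding \<beta>_def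
    using adj[OF fh tp_Pr[OF AO] \<beta>P] le_refl[OF BO \<beta>P] unfolding \<beta>_def by blast
  then have fb: "rdx D f \<beta> = tp D A" using top_eq[OF AO rdx_Pr[OF fh \<beta>P]] by blast
  obtain k where k: "k \<in> hom D A C" and ck: "cmp D c k = f"
    using cc AO fh fb unfolding is_full_comprehension_def C_def by blast
  have idA: "idt D A \<in> hom D A A" using id_hom[OF AO] .
  have dA: "dom D (idt D A) = A" using idA homD by blast
  have univ: "\<forall>X \<in> Ob D. \<forall>u \<in> hom D X (dom D f). \<forall>v \<in> hom D X (dom D c).
        cmp D f u = cmp D c v \<longrightarrow>
        (\<exists>!w. w \<in> hom D X (dom D (idt D A)) \<and> cmp D (idt D A) w = u \<and> cmp D k w = v)"
  proof (intro ballI impI)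
    fix X u v assume X: "X \<in> Ob D" and u: "u \<in> hom D X (dom D f)" and v: "v \<in> hom D X (dom D c)"
      and e: "cmp D f u = cmp D c v"
    have u': "u \<in> hom D X A" using u fh homD by auto
    have v': "v \<in> hom D X C" using v C_def by simp
    have "cmp D c (cmp D k u) = cmp D c v" using assoc[OF u' k ch] ck e by simp
    then have kv: "cmp D k u = v" using cm X comp_hom[OF u' k] v' unfolding is_mono_def C_def by blast
    show "\<exists>!w. w \<in> hom D X (dom D (idt D A)) \<and> cmp D (idt D A) w = u \<and> cmp D k w = v"
    proof (rule ex1I[of _ u])
      show "u \<in> hom D X (dom D (idt D A)) \<and> cmp D (idt D A) u = u \<and> cmp D k u = v"
        using u' kv id_l[OF u'] dA by simp
      fix w assume "w \<in> hom D X (dom D (idt D A)) \<and> cmp D (idt D A) w = u \<and> cmp D k w = v"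
      then show "w = u" using id_l dA by metis
    qed
  qed
  have fA: "f \<in> Ar D" "dom D f = A" "cod D f = B" using fh homD by auto
  have cA: "c \<in> Ar D" "dom D c = C" "cod D c = B" using ch homD by auto
  have kA: "k \<in> Ar D" "dom D k = A" "cod D k = C" using k homD by auto
  have iA: "idt D A \<in> Ar D" "dom D (idt D A) = A" "cod D (idt D A) = A" using idA homD by auto
  have PB: "is_pullback D f c (idt D A) k"
    unfolding is_pullback_def
    using fA cA kA iA univ ck id_r[OF fh] by simp
  have "rdx D c \<beta> = ex D k (rdx D (idt D A) (tp D A))"
    unfolding \<beta>_def using BC[OF PB, of "tp D A"] fA(2) tp_Pr[OF AO] by simp
  then have tpC: "tp D C = ex D k (tp D A)" using cb rdx_id[OF AO tp_Pr[OF AO]] by simp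
  have CAO: "prd D C A \<in> Ob D" using prd_ob[OF CO AO] .
  have BBO: "prd D B B \<in> Ob D" using prd_ob[OF BO BO] .
  have p1: "pr1 D C A \<in> hom D (prd D C A) C" using pr1_hom[OF CO AO] .
  have p2: "pr2 D C A \<in> hom D (prd D C A) A" using pr2_hom[OF CO AO] .
  define P where "P = pair D (cmp D c (pr1 D C A)) (cmp D f (pr2 D C A))"
  have Ph: "P \<in> hom D (prd D C A) (prd D B B)"
    unfolding P_def using pair_hom[OF BO BO CAO comp_hom[OF p1 ch] comp_hom[OF p2 fh]] .
  define F where "F = rdx D P (delta D B)"
  have FP: "F \<in> Pr D (prd D C A)" unfolding F_def using rdx_Pr[OF Ph delta_Pr[OF BO]] .
  have Fat: "rdx D (pair D u v) F = rdx D (pair D (cmp D c u) (cmp D f v)) (delta D B)"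
    if Y: "Y \<in> Ob D" and u: "u \<in> hom D Y C" and v: "v \<in> hom D Y A" for Y u v
  proof -
    have uv: "pair D u v \<in> hom D Y (prd D C A)" using pair_hom[OF CO AO Y u v] .
    have "rdx D (pair D u v) F = rdx D (cmp D P (pair D u v)) (delta D B)"
      unfolding F_def using rdx_comp[OF uv Ph delta_Pr[OF BO]] by simp
    also have "cmp D P (pair D u v) = pair D (cmp D (cmp D c (pr1 D C A)) (pair D u v)) (cmp D (cmp D f (pr2 D C A)) (pair D u v))"
      unfolding P_def using pair_comp[OF BO BO Y CAO comp_hom[OF p1 ch] comp_hom[OF p2 fh] uv] .
    also have "cmp D (cmp D c (pr1 D C A)) (pair D u v) = cmp D c u"
      using assoc[OF uv p1 ch] pr1_pair[OF CO AO Y u v] by simp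
    also have "cmp D (cmp D f (pr2 D C A)) (pair D u v) = cmp D f v"
      using assoc[OF uv p2 fh] pr2_pair[OF CO AO Y u v] by simp
    finally show ?thesis .
  qed
  have Ftp: "rdx D (pair D u v) F = tp D Y \<longleftrightarrow> cmp D c u = cmp D f v"
    if Y: "Y \<in> Ob D" and u: "u \<in> hom D Y C" and v: "v \<in> hom D Y A" for Y u v
    using Fat[OF Y u v] ext[OF E Y BO comp_hom[OF u ch] comp_hom[OF v fh]] by simp
  define s where "s = pair D k (idt D A)"
  have sh: "s \<in> hom D A (prd D C A)" unfolding s_def using pair_hom[OF CO AO AO k idA] .
  have ps: "cmp D (pr1 D C A) s = k" unfolding s_def using pr1_pair[OF CO AO AO k idA] .
  have exF: "ex D (pr1 D C A) F \<in> Pr D C" using ex_Pr[OF p1 FP] .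
  have unit: "leq D (prd D C A) F (rdx D (pr1 D C A) (ex D (pr1 D C A) F))"
    using adj[OF p1 FP exF] le_refl[OF CO exF] by blast
  have "rdx D s F = tp D A" unfolding s_def
    using Ftp[OF AO k idA] ck id_r[OF fh] by simp
  moreover have "leq D A (rdx D s F) (rdx D s (rdx D (pr1 D C A) (ex D (pr1 D C A) F)))"
    using rdx_mono[OF sh FP rdx_Pr[OF p1 exF] unit] .
  moreover have "rdx D s (rdx D (pr1 D C A) (ex D (pr1 D C A) F)) = rdx D k (ex D (pr1 D C A) F)"
    using rdx_comp[OF sh p1 exF] ps by simp
  ultimately have "leq D A (tp D A) (rdx D k (ex D (pr1 D C A) F))" by simp
  then have "leq D C (ex D k (tp D A)) (ex D (pr1 D C A) F)"
    using adj[OF k tp_Pr[OF AO] exF] by blast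
  then have tot: "leq D C (tp D C) (ex D (pr1 D C A) F)" using tpC by simp
  define YAA where "YAA = prd D C (prd D A A)"
  have AAO: "prd D A A \<in> Ob D" using prd_ob[OF AO AO] .
  have YO: "YAA \<in> Ob D" unfolding YAA_def using prd_ob[OF CO AAO] .
  define q1 where "q1 = pr1 D C (prd D A A)"
  define q2 where "q2 = cmp D (pr1 D A A) (pr2 D C (prd D A A))"
  define q3 where "q3 = cmp D (pr2 D A A) (pr2 D C (prd D A A))"
  have q1h: "q1 \<in> hom D YAA C" unfolding q1_def YAA_def using pr1_hom[OF CO AAO] .
  have q2h: "q2 \<in> hom D YAA A" unfolding q2_def YAA_def using comp_hom[OF pr2_hom[OF CO AAO] pr1_hom[OF AO AO]] .
  have q3h: "q3 \<in> hom D YAA A" unfolding q3_def YAA_def using comp_hom[OF pr2_hom[OF CO AAO] pr2_hom[OF AO AO]] .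
  have q12: "pair D q1 q2 \<in> hom D YAA (prd D C A)" using pair_hom[OF CO AO YO q1h q2h] .
  have q13: "pair D q1 q3 \<in> hom D YAA (prd D C A)" using pair_hom[OF CO AO YO q1h q3h] .
  have q23: "pair D q2 q3 \<in> hom D YAA (prd D A A)" using pair_hom[OF AO AO YO q2h q3h] .
  have a1: "rdx D (pair D q1 q2) F \<in> Pr D YAA" using rdx_Pr[OF q12 FP] .
  have a2: "rdx D (pair D q1 q3) F \<in> Pr D YAA" using rdx_Pr[OF q13 FP] .
  have a3: "rdx D (pair D q2 q3) (delta D A) \<in> Pr D YAA" using rdx_Pr[OF q23 delta_Pr[OF AO]] .
  have sv: "leq D YAA (mt D YAA (rdx D (pair D q1 q2) F) (rdx D (pair D q1 q3) F))
                   (rdx D (pair D q2 q3) (delta D A))"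
  proof (rule pointwise[OF FC YO mt_Pr[OF YO a1 a2] a3])
    fix Y h assume Y: "Y \<in> Ob D" and h: "h \<in> hom D Y YAA"
      and ht: "rdx D h (mt D YAA (rdx D (pair D q1 q2) F) (rdx D (pair D q1 q3) F)) = tp D Y"
    have r1: "rdx D h (rdx D (pair D q1 q2) F) \<in> Pr D Y" using rdx_Pr[OF h a1] .
    have r2: "rdx D h (rdx D (pair D q1 q3) F) \<in> Pr D Y" using rdx_Pr[OF h a2] .
    have mm: "mt D Y (rdx D h (rdx D (pair D q1 q2) F)) (rdx D h (rdx D (pair D q1 q3) F)) = tp D Y"
      using ht rdx_mt[OF h a1 a2] by simp
    have e1: "rdx D h (rdx D (pair D q1 q2) F) = tp D Y"
      using top_eq[OF Y r1] mt_le1[OF Y r1 r2] mm by simp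
    have e2: "rdx D h (rdx D (pair D q1 q3) F) = tp D Y"
      using top_eq[OF Y r2] mt_le2[OF Y r1 r2] mm by simp
    have h1: "cmp D q1 h \<in> hom D Y C" using comp_hom[OF h q1h] .
    have h2: "cmp D q2 h \<in> hom D Y A" using comp_hom[OF h q2h] .
    have h3: "cmp D q3 h \<in> hom D Y A" using comp_hom[OF h q3h] .
    have "rdx D h (rdx D (pair D q1 q2) F) = rdx D (pair D (cmp D q1 h) (cmp D q2 h)) F"
      using rdx_comp[OF h q12 FP] pair_comp[OF CO AO Y YO q1h q2h h] by simp
    then have c2: "cmp D c (cmp D q1 h) = cmp D f (cmp D q2 h)" using e1 Ftp[OF Y h1 h2] by simp
    have "rdx D h (rdx D (pair D q1 q3) F) = rdx D (pair D (cmp D q1 h) (cmp D q3 h)) F"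
      using rdx_comp[OF h q13 FP] pair_comp[OF CO AO Y YO q1h q3h h] by simp
    then have c3: "cmp D c (cmp D q1 h) = cmp D f (cmp D q3 h)" using e2 Ftp[OF Y h1 h3] by simp
    have "cmp D q2 h = cmp D q3 h" using fm Y h2 h3 c2 c3 fA(2) unfolding is_mono_def by metis
    then have "rdx D (pair D (cmp D q2 h) (cmp D q3 h)) (delta D A) = tp D Y"
      using ext[OF E Y AO h2 h3] by simp
    then show "rdx D h (rdx D (pair D q2 q3) (delta D A)) = tp D Y"
      using rdx_comp[OF h q23 delta_Pr[OF AO]] pair_comp[OF AO AO Y YO q2h q3h h] by simp
  qed
  have func: "is_functional D C A F"
    unfolding is_functional_def Let_def using FP tot sv unfolding YAA_def q1_def q2_def q3_def by simp
  obtain g where gh: "g \<in> hom D C A" and gF: "rdx D (pair D (cmp D g (pr1 D C A)) (pr2 D C A)) (delta D A) = F"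
    using CC AO CO func unfolding is_cauchy_complete_def cauchy_complete_object_def by blast
  have idC: "idt D C \<in> hom D C C" using id_hom[OF CO] .
  define s' where "s' = pair D (idt D C) g"
  have s'h: "s' \<in> hom D C (prd D C A)" unfolding s'_def using pair_hom[OF CO AO CO idC gh] .
  have gp: "cmp D g (pr1 D C A) \<in> hom D (prd D C A) A" using comp_hom[OF p1 gh] .
  have G: "pair D (cmp D g (pr1 D C A)) (pr2 D C A) \<in> hom D (prd D C A) (prd D A A)"
    using pair_hom[OF AO AO CAO gp p2] .
  have "rdx D s' F = rdx D (cmp D (pair D (cmp D g (pr1 D C A)) (pr2 D C A)) s') (delta D A)"
    using gF rdx_comp[OF s'h G delta_Pr[OF AO]] by simp
  also have "cmp D (pair D (cmp D g (pr1 D C A)) (pr2 D C A)) s' = pair D (cmp D (cmp D g (pr1 D C A)) s') (cmp D (pr2 D C A) s')"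
    using pair_comp[OF AO AO CO CAO gp p2 s'h] .
  also have "cmp D (cmp D g (pr1 D C A)) s' = g"
    using assoc[OF s'h p1 gh] pr1_pair[OF CO AO CO idC gh] id_r[OF gh] unfolding s'_def by simp
  also have "cmp D (pr2 D C A) s' = g"
    using pr2_pair[OF CO AO CO idC gh] unfolding s'_def by simp
  also have "rdx D (pair D g g) (delta D A) = tp D C" using ext[OF E CO AO gh gh] by simp
  finally have "rdx D s' F = tp D C" .
  then have "cmp D c (idt D C) = cmp D f g" using Ftp[OF CO idC gh] unfolding s'_def by simp
  then have cfg: "c = cmp D f g" using id_r[OF ch] by simp
  have kg: "cmp D k g = idt D C"
  proof -
    have "cmp D c (cmp D k g) = cmp D c (idt D C)"
      using assoc[OF gh k ch] ck cfg id_r[OF ch] by simp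
    then show ?thesis using cm CO comp_hom[OF gh k] idC cA(2) unfolding is_mono_def by metis
  qed
  have gk: "cmp D g k = idt D A"
  proof -
    have "cmp D f (cmp D g k) = cmp D f (idt D A)"
      using assoc[OF k gh fh] ck cfg id_r[OF fh] by simp
    then show ?thesis using fm AO comp_hom[OF k gh] idA fA(2) unfolding is_mono_def by metis
  qed
  have iso: "is_iso D k" unfolding is_iso_def using kA gh gk kg by auto
  have "is_full_comprehension D B (ex D f (tp D A)) c" using cc unfolding \<beta>_def .
  moreover have "cod D k = dom D c" using kA cA by simp
  ultimately show ?thesis using iso ck by blast
qed
end

theorem lemma5p1:
  fixes D :: "('o, 'a, 'p) doctrine"
  assumes "is_regular_doctrine D"
    and "is_extensional D"
    and "is_cauchy_complete D"
    and "has_full_comprehensions D"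
    and "A \<in> Ob D" and "B \<in> Ob D" and "f \<in> hom D A B"
  shows "(is_mono D f \<longleftrightarrow>
            (\<exists>\<beta> \<in> Pr D B. \<exists>c k. is_full_comprehension D B \<beta> c \<and> is_iso D k \<and>
                cod D k = dom D c \<and> f = cmp D c k))
       \<and> (is_mono D f \<longrightarrow>
            (\<exists>c k. is_full_comprehension D B (ex D f (tp D A)) c \<and> is_iso D k \<and>
                cod D k = dom D c \<and> f = cmp D c k))"
proof -
  interpret RD D using assms(1) by (rule RD.intro)
  have fm2: "is_mono D f \<Longrightarrow> (\<exists>c k. is_full_comprehension D B (ex D f (tp D A)) c \<and> is_iso D k \<and>
                cod D k = dom D c \<and> f = cmp D c k)"
    using main[OF assms(2,3,4,5,6,7)] by blast
  have bP: "ex D f (tp D A) \<in> Pr D B" using ex_Pr[OF assms(7) tp_Pr[OF assms(5)]] .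
  have bk: "is_mono D f" if "\<exists>\<beta> \<in> Pr D B. \<exists>c k. is_full_comprehension D B \<beta> c \<and> is_iso D k \<and>
                cod D k = dom D c \<and> f = cmp D c k"
    using that compr_mono mono_comp_iso by blast
  show ?thesis using fm2 bP bk by blast
qed

end
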